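(* Let $d$ be a positive integer and let $A\in\mathbb{R}^{[2]\times[n]}$ be a matrix that does not have an elimination ordering. Then there exists $b\in\mathbb{R}^{[2]}$ such that the solution graph $G(R(A,b))$ is not connected.
   Context: Fix a positive integer $d$ and let $D=\{0,1,\dots,d\}$; $[n]=\{1,\dots,n\}$. For $A\in\mathbb{R}^{[m]\times[n]}$ and $b\in\mathbb{R}^{[m]}$, $R(A,b)=\{x\in D^{[n]} : Ax\ge b\}$. For $R\subseteq D^{[n]}$, the solution graph $G(R)$ is the undirected graph with vertex set $R$ in which $x,y$ are adjacent iff they differ in exactly one coordinate. A matrix $A=(a_{ij})$ with column index set $J$ can be eliminated at column $j\in J$ if (i) for every row $i$ with $a_{ij}>0$ we have $a_{ij'}=0$ for all $j'\in J\setminus\{j\}$, or (ii) for every row $i$ with $a_{ij}<0$ we have $a_{ij'}=0$ for all $j'\in J\setminus\{j\}$. For $J'\subseteq[n]$, $\mathrm{elm}(A,J')$ is the submatrix of $A$ obtained by deleting the columns indexed by $J'$. A sequence $(j_1,\dots,j_n)$ of the elements of $[n]$ is an elimination ordering (EO) of $A$ if for every $t\in[n]$ the matrix $\mathrm{elm}(A,\{j_1,\dots,j_{t-1}\})$ can be eliminated at column $j_t$. *)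

theory Defs
  imports Complex_Main
begin

(* Matrices A in R^{[m] x [n]} are functions nat => nat => real, entry a_ij = A i j,
   rows indexed by {1..m}, columns by {1..n}; b :: nat => real with b_i = b i. *)

definition grid :: "nat \<Rightarrow> nat \<Rightarrow> (nat \<Rightarrow> nat) set" where
  "grid d n = {x. (\<forall>j\<in>{1..n}. x j \<le> d) \<and> (\<forall>j. j \<notin> {1..n} \<longrightarrow> x j = 0)}"

definition solset :: "nat \<Rightarrow> nat \<Rightarrow> nat \<Rightarrow> (nat \<Rightarrow> nat \<Rightarrow> real) \<Rightarrow> (nat \<Rightarrow> real) \<Rightarrow> (nat \<Rightarrow> nat) set" where
  "solset d m n A b = {x \<in> grid d n. \<forall>i\<in>{1..m}. (\<Sum>j=1..n. A i j * real (x j)) \<ge> b i}"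

definition adj :: "nat \<Rightarrow> (nat \<Rightarrow> nat) \<Rightarrow> (nat \<Rightarrow> nat) \<Rightarrow> bool" where
  "adj n x y \<longleftrightarrow> card {j\<in>{1..n}. x j \<noteq> y j} = 1"

definition sol_graph_connected :: "nat \<Rightarrow> (nat \<Rightarrow> nat) set \<Rightarrow> bool" where
  "sol_graph_connected n R \<longleftrightarrow>
     (\<forall>x\<in>R. \<forall>y\<in>R. (\<lambda>u v. u \<in> R \<and> v \<in> R \<and> adj n u v)\<^sup>*\<^sup>* x y)"

definition can_elim :: "nat \<Rightarrow> (nat \<Rightarrow> nat \<Rightarrow> real) \<Rightarrow> nat set \<Rightarrow> nat \<Rightarrow> bool" where
  "can_elim m A J j \<longleftrightarrow> j \<in> J \<and>
     ((\<forall>i\<in>{1..m}. A i j > 0 \<longrightarrow> (\<forall>j'\<in>J - {j}. A i j' = 0)) \<or>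
      (\<forall>i\<in>{1..m}. A i j < 0 \<longrightarrow> (\<forall>j'\<in>J - {j}. A i j' = 0)))"

text \<open>Elimination ordering (j_1,...,j_n) = js!0,...,js!(n-1): elm(A,{j_1..j_{t-1}}) has
  column set [n] minus those columns, and must be eliminable at j_t.\<close>
definition is_EO :: "nat \<Rightarrow> nat \<Rightarrow> (nat \<Rightarrow> nat \<Rightarrow> real) \<Rightarrow> nat list \<Rightarrow> bool" where
  "is_EO m n A js \<longleftrightarrow> distinct js \<and> set js = {1..n} \<and>
     (\<forall>t<n. can_elim m A ({1..n} - set (take t js)) (js ! t))"

definition has_EO :: "nat \<Rightarrow> nat \<Rightarrow> (nat \<Rightarrow> nat \<Rightarrow> real) \<Rightarrow> bool" where
  "has_EO m n A \<longleftrightarrow> (\<exists>js. is_EO m n A js)"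

end

theory Submission
  imports Defs
begin

definition FF :: "nat \<Rightarrow> (nat \<Rightarrow> nat \<Rightarrow> real) \<Rightarrow> nat \<Rightarrow> (nat \<Rightarrow> nat) \<Rightarrow> real" where
  "FF n A i x = (\<Sum>j=1..n. A i j * real (x j))"

lemma FF_upd:
  assumes "l \<in> {1..n}"
  shows "FF n A i (x(l:=t)) = FF n A i x + A i l * (real t - real (x l))"
proof -
  have "FF n A i (x(l:=t)) - FF n A i x = (\<Sum>j=1..n. A i j * (real ((x(l:=t)) j) - real (x j)))"
    by (simp add: FF_def sum_subtractf[symmetric] right_diff_distrib)
  also have "\<dots> = (\<Sum>j=1..n. if j = l then A i l * (real t - real (x l)) else 0)"
    by (rule sum.cong) auto
  also have "\<dots> = A i l * (real t - real (x l))" using assms by simp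
  finally show ?thesis by simp
qed

lemma solset_iff:
  "x \<in> solset d 2 n A b \<longleftrightarrow> x \<in> grid d n \<and> FF n A 1 x \<ge> b 1 \<and> FF n A 2 x \<ge> b 2"
proof -
  have "{1..2::nat} = {1,2}" by auto
  then show ?thesis unfolding solset_def FF_def by auto
qed

lemma core:
  assumes M: "M \<subseteq> {1..n}"
  and x0R: "x0 \<in> solset d 2 n A b" and yR: "y \<in> solset d 2 n A b"
  and yd: "l0 \<in> M" "y l0 \<noteq> x0 l0"
  and dom: "\<And>x i. x \<in> grid d n \<Longrightarrow> (\<forall>l\<in>M. x l = x0 l) \<Longrightarrow> i = 1 \<or> i = 2 \<Longrightarrow> FF n A i x \<le> FF n A i x0"
  and iso: "\<And>l t. l \<in> M \<Longrightarrow> t \<le> d \<Longrightarrow> t \<noteq> x0 l \<Longrightarrow>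
     FF n A 1 x0 + A 1 l * (real t - real (x0 l)) < b 1 \<or> FF n A 2 x0 + A 2 l * (real t - real (x0 l)) < b 2"
  shows "\<not> sol_graph_connected n (solset d 2 n A b)"
proof
  let ?R = "solset d 2 n A b"
  let ?S = "{x. \<forall>l\<in>M. x l = x0 l}"
  have stp: "v \<in> ?S" if u: "u \<in> ?S" "u \<in> ?R" "v \<in> ?R" "adj n u v" for u v
  proof (rule ccontr)
    assume "v \<notin> ?S"
    then obtain l where l: "l \<in> M" "v l \<noteq> x0 l" by auto
    with u(1) have ul: "u l \<noteq> v l" by auto
    have lin: "l \<in> {1..n}" using l M by auto
    from u(4) have c1: "card {j\<in>{1..n}. u j \<noteq> v j} = 1" by (simp add: adj_def)
    then obtain jj where jj: "{j\<in>{1..n}. u j \<noteq> v j} = {jj}" by (rule card_1_singletonE)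
    have "l = jj" using jj ul lin by auto
    have eq: "\<forall>j\<in>{1..n}. j \<noteq> l \<longrightarrow> u j = v j"
    proof (intro ballI impI)
      fix j assume j: "j \<in> {1..n}" "j \<noteq> l"
      show "u j = v j"
      proof (rule ccontr)
        assume "u j \<noteq> v j"
        then have "j \<in> {j\<in>{1..n}. u j \<noteq> v j}" using j by simp
        then show False using jj \<open>l = jj\<close> j(2) by (metis singletonD)
      qed
    qed
    have ug: "u \<in> grid d n" and vg: "v \<in> grid d n" using u by (auto simp: solset_iff)
    have vu: "v = u(l := v l)"
    proof
      fix j show "v j = (u(l := v l)) j"
        using eq ug vg by (cases "j \<in> {1..n}") (auto simp: grid_def)
    qed
    have vld: "v l \<le> d" using vg lin by (auto simp: grid_def)
    have ul0: "u l = x0 l" using u(1) l by auto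
    have "FF n A i v \<le> FF n A i x0 + A i l * (real (v l) - real (x0 l))" if "i = 1 \<or> i = 2" for i
    proof -
      have "FF n A i v = FF n A i u + A i l * (real (v l) - real (u l))"
        using FF_upd[OF lin, of A i u "v l"] vu by simp
      moreover have "FF n A i u \<le> FF n A i x0" using dom[OF ug _ that] u(1) by auto
      ultimately show ?thesis using ul0 by simp
    qed
    moreover have "FF n A 1 v \<ge> b 1" "FF n A 2 v \<ge> b 2" using u(3) by (auto simp: solset_iff)
    ultimately show False using iso[OF l(1) vld l(2)] by force
  qed
  assume "sol_graph_connected n ?R"
  hence path: "(\<lambda>u v. u \<in> ?R \<and> v \<in> ?R \<and> adj n u v)\<^sup>*\<^sup>* x0 y"
    using x0R yR by (auto simp: sol_graph_connected_def)
  have "y \<in> ?S" using path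
  proof (induction rule: rtranclp_induct)
    case base then show ?case by simp
  next
    case (step u v) then show ?case using stp by blast
  qed
  then show False using yd by auto
qed

lemma elim_nonmixed:
  assumes "l \<in> J" "\<not> A 1 l * A 2 l < 0"
  shows "can_elim 2 A J l"
proof -
  have r: "i \<in> {1..2} \<Longrightarrow> i = 1 \<or> i = (2::nat)" for i by auto
  show ?thesis
  proof (cases "A 1 l \<ge> 0 \<and> A 2 l \<ge> 0")
    case True
    then show ?thesis using assms(1) unfolding can_elim_def by (metis not_le r)
  next
    case False
    hence "A 1 l \<le> 0 \<and> A 2 l \<le> 0" using assms(2)
      by (metis linorder_not_le mult_neg_pos mult_pos_neg order.strict_iff_order)
    then show ?thesis using assms(1) unfolding can_elim_def by (metis not_le r)
  qed
qed

lemma EO_exists: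
  assumes "\<And>j k. j \<in> {l\<in>{1..n}. A 1 l * A 2 l < 0} \<Longrightarrow> k \<in> {l\<in>{1..n}. A 1 l * A 2 l < 0} \<Longrightarrow> j = k"
  shows "has_EO 2 n A"
proof -
  define M where "M = {l\<in>{1..n}. A 1 l * A 2 l < 0}"
  have Mu: "j \<in> M \<Longrightarrow> k \<in> M \<Longrightarrow> j = k" for j k using assms M_def by blast
  define L1 where "L1 = filter (\<lambda>l. l \<notin> M) [1..<Suc n]"
  define L2 where "L2 = filter (\<lambda>l. l \<in> M) [1..<Suc n]"
  define js where "js = L1 @ L2"
  have dist: "distinct js" unfolding js_def L1_def L2_def by auto
  have setjs: "set js = {1..n}" unfolding js_def L1_def L2_def by auto
  have len: "length js = n" using dist setjs distinct_card by fastforce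
  have "can_elim 2 A ({1..n} - set (take t js)) (js ! t)" if t: "t < n" for t
  proof -
    let ?J = "{1..n} - set (take t js)"
    have inset: "js ! t \<in> set js" using t len by simp
    have indrop: "js ! t \<in> set (drop t js)" using t len
      by (metis Cons_nth_drop_Suc list.set_intros(1))
    have notake: "js ! t \<notin> set (take t js)"
      using indrop set_take_disj_set_drop_if_distinct[OF dist, of t t] by auto
    have inJ: "js ! t \<in> ?J" using inset notake setjs by auto
    show ?thesis
    proof (cases "js ! t \<in> M")
      case False
      then show ?thesis using elim_nonmixed[OF inJ] inset setjs M_def by auto
    next
      case True
      have tge: "t \<ge> length L1"
      proof (rule ccontr)
        assume "\<not> ?thesis"
        hence "js ! t = L1 ! t" by (simp add: js_def nth_append)
        hence "js ! t \<in> set L1" using \<open>\<not> length L1 \<le> t\<close> by simp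
        then show False using True L1_def by simp
      qed
      have "set (drop t js) \<subseteq> M"
        using tge unfolding js_def L2_def by (auto dest: in_set_dropD)
      have "?J - {js ! t} = {}"
      proof (rule ccontr)
        assume "?J - {js ! t} \<noteq> {}"
        then obtain j' where j': "j' \<in> ?J" "j' \<noteq> js ! t" by blast
        have "j' \<in> set js" using j' setjs by auto
        hence "j' \<in> set (drop t js)" using j'(1)
          by (metis DiffD2 UnE append_take_drop_id set_append)
        hence "j' \<in> M" using \<open>set (drop t js) \<subseteq> M\<close> by auto
        then show False using Mu True j'(2) by blast
      qed
      then show ?thesis using inJ unfolding can_elim_def by auto
    qed
  qed
  then have "is_EO 2 n A js" using dist setjs unfolding is_EO_def by auto
  then show ?thesis unfolding has_EO_def by auto
qed


lemma grid_upd: "x \<in> grid d n \<Longrightarrow> l \<in> {1..n} \<Longrightarrow> t \<le> d \<Longrightarrow> x(l:=t) \<in> grid d n"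
  unfolding grid_def by auto

lemma ex_max: assumes "finite S" "S \<noteq> {}" shows "\<exists>x\<in>S. \<forall>y\<in>S. (f y::real) \<le> f x"
proof -
  have "Max (f ` S) \<in> f ` S" using assms by simp
  then obtain x where "x \<in> S" "f x = Max (f ` S)" by auto
  moreover have "\<forall>y\<in>S. f y \<le> Max (f ` S)" using assms(1) by simp
  ultimately show ?thesis by metis
qed

lemma ex_min: assumes "finite S" "S \<noteq> {}" shows "\<exists>x\<in>S. \<forall>y\<in>S. f x \<le> (f y::real)"
  using ex_max[OF assms, of "\<lambda>x. - f x"] by auto

lemma mul_ge1_neg: "(1::real) \<le> t \<Longrightarrow> a < 0 \<Longrightarrow> t * a \<le> a"
  by (simp add: mult_le_cancel_right1)

lemma dom_base:
  assumes hz: "\<forall>l\<in>{1..n}. A 1 l * A 2 l < 0 \<or> z l = (if A 1 l \<ge> 0 \<and> A 2 l \<ge> 0 then d else 0)"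
    and x: "x \<in> grid d n" and agree: "\<forall>l\<in>{1..n}. A 1 l * A 2 l < 0 \<longrightarrow> x l = z l"
    and i: "i = 1 \<or> i = 2"
  shows "FF n A i x \<le> FF n A i z"
  unfolding FF_def
proof (rule sum_mono)
  fix l assume l: "l \<in> {1..n}"
  show "A i l * real (x l) \<le> A i l * real (z l)"
  proof (cases "A 1 l * A 2 l < 0")
    case True then show ?thesis using agree l by simp
  next
    case False
    note zl = hz[rule_format, OF l]
    have xd: "x l \<le> d" using x l by (auto simp: grid_def)
    show ?thesis
    proof (cases "A 1 l \<ge> 0 \<and> A 2 l \<ge> 0")
      case True
      then have "z l = d" using zl False by auto
      moreover have "A i l \<ge> 0" using True i by auto
      ultimately show ?thesis using xd by (simp add: mult_left_mono)
    next
      case c2: False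
      hence "A 1 l \<le> 0 \<and> A 2 l \<le> 0" using False
        by (metis linorder_not_le mult_neg_pos mult_pos_neg order.strict_iff_order)
      hence "A i l \<le> 0" using i by auto
      moreover have "z l = 0" using zl False c2 by auto
      ultimately show ?thesis by (simp add: mult_nonpos_nonneg)
    qed
  qed
qed


theorem lemma4:
  fixes d n :: nat and A :: "nat \<Rightarrow> nat \<Rightarrow> real"
  assumes "d > 0"
    and "\<not> has_EO 2 n A"
  shows "\<exists>b :: nat \<Rightarrow> real. \<not> sol_graph_connected n (solset d 2 n A b)"
proof -
  define M where "M = {l\<in>{1..n}. A 1 l * A 2 l < 0}"
  obtain j k where jk: "j \<in> M" "k \<in> M" "j \<noteq> k"
    using EO_exists[of n A] assms(2) unfolding M_def by blast
  have Mn: "M \<subseteq> {1..n}" "finite M" unfolding M_def by auto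
  have mixed: "(A 1 l > 0 \<and> A 2 l < 0) \<or> (A 1 l < 0 \<and> A 2 l > 0)" if "l \<in> M" for l
    using that unfolding M_def by (auto simp: mult_less_0_iff)
  define base where "base = (\<lambda>l. if l \<in> {1..n} \<and> A 1 l \<ge> 0 \<and> A 2 l \<ge> 0 then d else 0)"
  have bg: "base \<in> grid d n" unfolding grid_def base_def by auto
  have bM: "base l = 0" if "l \<in> M" for l using mixed[OF that] unfolding base_def by auto
  have d1: "1 \<le> d" using assms(1) by simp
  have domz: "FF n A i x \<le> FF n A i z"
    if "\<forall>l\<in>{1..n}. l \<notin> M \<longrightarrow> z l = base l" "x \<in> grid d n" "\<forall>l\<in>M. x l = z l" "i = 1 \<or> i = 2"
    for z x i
  proof (rule dom_base[OF _ that(2) _ that(4)])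
    show "\<forall>l\<in>{1..n}. A 1 l * A 2 l < 0 \<or> z l = (if 0 \<le> A 1 l \<and> 0 \<le> A 2 l then d else 0)"
      using that(1) unfolding M_def base_def by auto
    show "\<forall>l\<in>{1..n}. A 1 l * A 2 l < 0 \<longrightarrow> x l = z l"
      using that(3) unfolding M_def by auto
  qed
  define P where "P = {l\<in>M. A 1 l > 0}"
  define N where "N = {l\<in>M. A 1 l < 0}"
  have PN: "finite P" "finite N" "P \<subseteq> M" "N \<subseteq> M" using Mn unfolding P_def N_def by auto
  have Pm: "A 1 l > 0 \<and> A 2 l < 0" if "l \<in> P" for l using that mixed unfolding P_def by force
  have Nm: "A 1 l < 0 \<and> A 2 l > 0" if "l \<in> N" for l using that mixed unfolding N_def by force
  have MPN: "l \<in> P \<or> l \<in> N" if "l \<in> M" for l using mixed[OF that] that unfolding P_def N_def by auto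
  have tge1: "real t \<ge> 1" if "t \<noteq> 0" for t :: nat using that by simp
  show ?thesis
  proof (cases "P \<noteq> {} \<and> N \<noteq> {}")
    case True
    obtain jp where jp: "jp \<in> P" "\<forall>l\<in>P. A 2 l \<le> A 2 jp"
      using ex_max[of P "\<lambda>l. A 2 l"] PN True by auto
    obtain kn where kn: "kn \<in> N" "\<forall>l\<in>N. A 1 l \<le> A 1 kn"
      using ex_max[of N "\<lambda>l. A 1 l"] PN True by auto
    have jpM: "jp \<in> M" "kn \<in> M" using jp(1) kn(1) PN by auto
    have jpn: "jp \<in> {1..n}" "kn \<in> {1..n}" "jp \<noteq> kn" "jp \<in> M" "kn \<in> M"
      using jpM Mn(1) Pm[OF jp(1)] Nm[OF kn(1)] by auto
    define y where "y = base(jp := 1, kn := 1)"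
    define b where "b = (\<lambda>i::nat. if i = 1 then FF n A 1 base + min 0 (A 1 jp + A 1 kn)
                             else FF n A 2 base + min 0 (A 2 jp + A 2 kn))"
    have Fy: "FF n A i y = FF n A i base + A i jp + A i kn" for i
      using FF_upd[OF jpn(2), of A i "base(jp:=1)" 1] FF_upd[OF jpn(1), of A i base 1]
        bM[OF jpn(4)] bM[OF jpn(5)] jpn(3) unfolding y_def by simp
    have yg: "y \<in> grid d n" unfolding y_def using grid_upd bg jpn d1 by simp
    have "\<not> sol_graph_connected n (solset d 2 n A b)"
    proof (rule core[OF Mn(1), of base d A b y jp])
      show "base \<in> solset d 2 n A b" using bg by (simp add: solset_iff b_def)
      show "y \<in> solset d 2 n A b" using yg by (simp add: solset_iff b_def Fy)
      show "jp \<in> M" by (rule jpn)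
      show "y jp \<noteq> base jp" using bM[OF jpn(4)] jpn(3) by (simp add: y_def)
      show "FF n A i x \<le> FF n A i base" if "x \<in> grid d n" "\<forall>l\<in>M. x l = base l" "i = 1 \<or> i = 2" for x i
        using domz[of base x i] that by auto
      fix l t assume l: "l \<in> M" "t \<le> d" "t \<noteq> base l"
      have t1: "real t \<ge> 1" using l bM by simp
      have bl: "real (base l) = 0" using bM l by simp
      from MPN[OF l(1)] show "FF n A 1 base + A 1 l * (real t - real (base l)) < b 1 \<or>
          FF n A 2 base + A 2 l * (real t - real (base l)) < b 2"
      proof
        assume lP: "l \<in> P"
        have "A 2 l * real t \<le> A 2 l" using mul_ge1_neg[OF t1, of "A 2 l"] Pm[OF lP] by (simp add: mult.commute)
        moreover have "A 2 l \<le> A 2 jp" using jp lP by auto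
        moreover have "A 2 jp < 0" "A 2 kn > 0" using Pm[OF jp(1)] Nm[OF kn(1)] by auto
        ultimately have "A 2 l * (real t - real (base l)) < min 0 (A 2 jp + A 2 kn)"
          using bl by (smt (verit) min_def)
        then show ?thesis unfolding b_def by simp
      next
        assume lN: "l \<in> N"
        have "A 1 l * real t \<le> A 1 l" using mul_ge1_neg[OF t1, of "A 1 l"] Nm[OF lN] by (simp add: mult.commute)
        moreover have "A 1 l \<le> A 1 kn" using kn lN by auto
        moreover have "A 1 kn < 0" "A 1 jp > 0" using Pm[OF jp(1)] Nm[OF kn(1)] by auto
        ultimately have "A 1 l * (real t - real (base l)) < min 0 (A 1 jp + A 1 kn)"
          using bl by (smt (verit) min_def)
        then show ?thesis unfolding b_def by simp
      qed
    qed
    then show ?thesis by blast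
  next
    case False
    then consider "N = {}" | "P = {}" by blast
    then show ?thesis
    proof cases
      case 1
      have sgn: "A 2 l < 0 \<and> A 1 l > 0" if "l \<in> M" for l
        using MPN[OF that] \<open>N = {}\<close> Pm by blast
      obtain k' where k': "k' \<in> M" "\<forall>l\<in>M. A 2 k' \<le> A 2 l"
        using ex_min[of M "\<lambda>l. A 2 l"] Mn jk by auto
      obtain j' where j': "j' \<in> M" "j' \<noteq> k'" using jk by metis
      have kn: "k' \<in> {1..n}" "j' \<in> {1..n}" using k' j' Mn by auto
      define x0 where "x0 = base(k' := 1)"
      define y where "y = x0(k' := 0, j' := 1)"
      define b where "b = (\<lambda>i::nat. if i = 1 then FF n A 1 x0 + min 0 (A 1 j' - A 1 k') else FF n A 2 x0)"
      have x0M: "x0 l = (if l = k' then 1 else 0)" if "l \<in> M" for l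
        using bM[OF that] unfolding x0_def by simp
      have Fy: "FF n A i y = FF n A i x0 - A i k' + A i j'" for i
        using FF_upd[OF kn(2), of A i "x0(k':=0)" 1] FF_upd[OF kn(1), of A i x0 0]
          x0M[OF k'(1)] x0M[OF j'(1)] j'(2) unfolding y_def by simp
      have x0g: "x0 \<in> grid d n" unfolding x0_def using grid_upd bg kn d1 by simp
      have yg: "y \<in> grid d n" unfolding y_def using grid_upd x0g kn d1 by simp
      have "\<not> sol_graph_connected n (solset d 2 n A b)"
      proof (rule core[OF Mn(1), of x0 d A b y k'])
        show "x0 \<in> solset d 2 n A b" using x0g by (simp add: solset_iff b_def)
        have "A 2 k' \<le> A 2 j'" using k' j' by auto
        moreover have "A 1 j' > 0" using sgn[OF j'(1)] by auto
        ultimately show "y \<in> solset d 2 n A b" using yg by (simp add: solset_iff b_def Fy)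
        show "k' \<in> M" by (rule k')
        show "y k' \<noteq> x0 k'" using j'(2) by (simp add: y_def x0_def)
        show "FF n A i x \<le> FF n A i x0" if "x \<in> grid d n" "\<forall>l\<in>M. x l = x0 l" "i = 1 \<or> i = 2" for x i
          using domz[of x0 x i] that k'(1) unfolding x0_def by auto
        fix l t assume l: "l \<in> M" "t \<le> d" "t \<noteq> x0 l"
        have "FF n A 2 x0 + A 2 l * (real t - real (x0 l)) < b 2 \<or> FF n A 1 x0 + A 1 l * (real t - real (x0 l)) < b 1"
        proof (cases "l = k'")
          case False
          then have t1: "real t \<ge> 1" and x0l: "real (x0 l) = 0" using l x0M by auto
          have "A 2 l * real t \<le> A 2 l" using mul_ge1_neg[OF t1, of "A 2 l"] sgn[OF l(1)] by (simp add: mult.commute)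
          moreover have "A 2 l * (real t - real (x0 l)) = A 2 l * real t" using x0l by simp
          ultimately have "A 2 l * (real t - real (x0 l)) < 0" using sgn[OF l(1)] by linarith
          then show ?thesis unfolding b_def by simp
        next
          case True
          then have x0l: "real (x0 l) = 1" and x0n: "x0 l = 1" using l x0M by auto
          show ?thesis
          proof (cases "t = 0")
            case True
            have "A 1 l * (real t - real (x0 l)) = - A 1 l" using True x0l by simp
            moreover have "- A 1 l < min 0 (A 1 j' - A 1 k')" using sgn[OF l(1)] sgn[OF j'(1)] \<open>l = k'\<close> by simp
            ultimately show ?thesis unfolding b_def by simp
          next
            case False
            with l(3) x0n have t2: "real t - 1 \<ge> 1" by auto
            have "A 2 l * (real t - 1) \<le> A 2 l" using mul_ge1_neg[OF t2, of "A 2 l"] sgn[OF l(1)] by (simp add: mult.commute)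
            moreover have "A 2 l * (real t - real (x0 l)) = A 2 l * (real t - 1)" using x0l by simp
          ultimately have "A 2 l * (real t - real (x0 l)) < 0" using sgn[OF l(1)] by linarith
            then show ?thesis unfolding b_def by simp
          qed
        qed
        then show "FF n A 1 x0 + A 1 l * (real t - real (x0 l)) < b 1 \<or> FF n A 2 x0 + A 2 l * (real t - real (x0 l)) < b 2"
          by blast
      qed
      then show ?thesis by blast
    next
      case 2
      have sgn: "A 1 l < 0 \<and> A 2 l > 0" if "l \<in> M" for l
        using MPN[OF that] \<open>P = {}\<close> Nm by blast
      obtain k' where k': "k' \<in> M" "\<forall>l\<in>M. A 1 k' \<le> A 1 l"
        using ex_min[of M "\<lambda>l. A 1 l"] Mn jk by auto
      obtain j' where j': "j' \<in> M" "j' \<noteq> k'" using jk by metis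
      have kn: "k' \<in> {1..n}" "j' \<in> {1..n}" using k' j' Mn by auto
      define x0 where "x0 = base(k' := 1)"
      define y where "y = x0(k' := 0, j' := 1)"
      define b where "b = (\<lambda>i::nat. if i = 2 then FF n A 2 x0 + min 0 (A 2 j' - A 2 k') else FF n A 1 x0)"
      have x0M: "x0 l = (if l = k' then 1 else 0)" if "l \<in> M" for l
        using bM[OF that] unfolding x0_def by simp
      have Fy: "FF n A i y = FF n A i x0 - A i k' + A i j'" for i
        using FF_upd[OF kn(2), of A i "x0(k':=0)" 1] FF_upd[OF kn(1), of A i x0 0]
          x0M[OF k'(1)] x0M[OF j'(1)] j'(2) unfolding y_def by simp
      have x0g: "x0 \<in> grid d n" unfolding x0_def using grid_upd bg kn d1 by simp
      have yg: "y \<in> grid d n" unfolding y_def using grid_upd x0g kn d1 by simp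
      have "\<not> sol_graph_connected n (solset d 2 n A b)"
      proof (rule core[OF Mn(1), of x0 d A b y k'])
        show "x0 \<in> solset d 2 n A b" using x0g by (simp add: solset_iff b_def)
        have "A 1 k' \<le> A 1 j'" using k' j' by auto
        moreover have "A 2 j' > 0" using sgn[OF j'(1)] by auto
        ultimately show "y \<in> solset d 2 n A b" using yg by (simp add: solset_iff b_def Fy)
        show "k' \<in> M" by (rule k')
        show "y k' \<noteq> x0 k'" using j'(2) by (simp add: y_def x0_def)
        show "FF n A i x \<le> FF n A i x0" if "x \<in> grid d n" "\<forall>l\<in>M. x l = x0 l" "i = 1 \<or> i = 2" for x i
          using domz[of x0 x i] that k'(1) unfolding x0_def by auto
        fix l t assume l: "l \<in> M" "t \<le> d" "t \<noteq> x0 l"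
        have "FF n A 1 x0 + A 1 l * (real t - real (x0 l)) < b 1 \<or> FF n A 2 x0 + A 2 l * (real t - real (x0 l)) < b 2"
        proof (cases "l = k'")
          case False
          then have t1: "real t \<ge> 1" and x0l: "real (x0 l) = 0" using l x0M by auto
          have "A 1 l * real t \<le> A 1 l" using mul_ge1_neg[OF t1, of "A 1 l"] sgn[OF l(1)] by (simp add: mult.commute)
          moreover have "A 1 l * (real t - real (x0 l)) = A 1 l * real t" using x0l by simp
          ultimately have "A 1 l * (real t - real (x0 l)) < 0" using sgn[OF l(1)] by linarith
          then show ?thesis unfolding b_def by simp
        next
          case True
          then have x0l: "real (x0 l) = 1" and x0n: "x0 l = 1" using l x0M by auto
          show ?thesis
          proof (cases "t = 0")
            case True
            have "A 2 l * (real t - real (x0 l)) = - A 2 l" using True x0l by simp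
            moreover have "- A 2 l < min 0 (A 2 j' - A 2 k')" using sgn[OF l(1)] sgn[OF j'(1)] \<open>l = k'\<close> by simp
            ultimately show ?thesis unfolding b_def by simp
          next
            case False
            with l(3) x0n have t2: "real t - 1 \<ge> 1" by auto
            have "A 1 l * (real t - 1) \<le> A 1 l" using mul_ge1_neg[OF t2, of "A 1 l"] sgn[OF l(1)] by (simp add: mult.commute)
            moreover have "A 1 l * (real t - real (x0 l)) = A 1 l * (real t - 1)" using x0l by simp
          ultimately have "A 1 l * (real t - real (x0 l)) < 0" using sgn[OF l(1)] by linarith
            then show ?thesis unfolding b_def by simp
          qed
        qed
        then show "FF n A 1 x0 + A 1 l * (real t - real (x0 l)) < b 1 \<or> FF n A 2 x0 + A 2 l * (real t - real (x0 l)) < b 2"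
          by blast
      qed
      then show ?thesis by blast
    qed
  qed
qed

end
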